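(* Let $(A,\circ_A)$ be a Leibniz algebra, $(l,r,V)$ a representation of it, and $T:V\to A$ an anti-$\mathcal O$-operator of $(A,\circ_A)$ associated to $(l,r,V)$. Define multiplications on $V$ by $u\succ_V v=-l(Tu)v$ and $u\prec_V v=-r(Tv)u$, and set $u\circ_V v=u\succ_V v+u\prec_V v$. Then: (a) $(V,\succ_V,\prec_V)$ satisfies (AL2), (AL3), (AL4); (b) $(V,\succ_V,\prec_V)$ is an anti-pre-Leibniz algebra (equivalently, $(V,\circ_V)$ is a Leibniz algebra) if and only if $T$ is strong; (c) in this case $T$ is a homomorphism of Leibniz algebras from $(V,\circ_V)$ to $(A,\circ_A)$, there is a well-defined anti-pre-Leibniz algebra structure on $T(V)=\{Tu\mid u\in V\}\subseteq A$ given by $(Tu)\succ_A(Tv)=T(u\succ_V v)$, $(Tu)\prec_A(Tv)=T(u\prec_V v)$, and $T:V\to T(V)$ is a homomorphism of anti-pre-Leibniz algebras.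
   Context: All vector spaces are finite-dimensional over a field $\mathbb K$ of characteristic zero. A Leibniz algebra is a vector space $A$ with a multiplication $\circ_A$ satisfying $x\circ_A(y\circ_A z)=(x\circ_A y)\circ_A z+y\circ_A(x\circ_A z)$. A representation of $(A,\circ_A)$ is a triple $(l,r,V)$ with linear maps $l,r:A\to\mathrm{End}(V)$ such that for all $x,y\in A,v\in V$: $l(x\circ_A y)v=l(x)l(y)v-l(y)l(x)v$; $r(x\circ_A y)v=l(x)r(y)v-r(y)l(x)v$; $r(y)l(x)v=-r(y)r(x)v$. An anti-$\mathcal O$-operator of $(A,\circ_A)$ associated to $(l,r,V)$ is a linear map $T:V\to A$ with $(Tu)\circ_A(Tv)=-T\big(l(Tu)v+r(Tv)u\big)$ for all $u,v\in V$; it is strong if moreover $l\big((Tu)\circ_A(Tv)\big)w+r\big((Tu)\circ_A(Tw)\big)v-r\big((Tv)\circ_A(Tw)\big)u=0$ for all $u,v,w\in V$. An anti-pre-Leibniz algebra is a vector space $A$ with multiplications $\succ_A,\prec_A$ such that, with $x\circ_A y=x\succ_A y+x\prec_A y$, for all $x,y,z$: (AL1) $(x\circ_A y)\prec_A z=x\succ_A(y\circ_A z)-y\succ_A(x\circ_A z)$; (AL2) $(x\circ_A y)\succ_A z=y\succ_A(x\succ_A z)-x\succ_A(y\succ_A z)$; (AL3) $x\prec_A(y\circ_A z)=(y\succ_A x)\prec_A z-y\succ_A(x\prec_A z)$; (AL4) $(x\succ_A y)\prec_A z=-(y\prec_A x)\prec_A z$. A homomorphism of anti-pre-Leibniz algebras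 is a linear map preserving both multiplications. *)

theory Defs
  imports Main "HOL.Vector_Spaces"
begin

text \<open>Vector spaces over a field 'k of characteristic zero are modelled with the
  library locale vector_space (scalar multiplication as parameter).
  Finite-dimensionality: existence of a finite basis.\<close>

definition fin_dim_vs :: "('k::field \<Rightarrow> 'v::ab_group_add \<Rightarrow> 'v) \<Rightarrow> bool" where
  "fin_dim_vs s \<longleftrightarrow> (\<exists>B. finite_dimensional_vector_space s B)"

definition bilinear_map ::
  "('k::field \<Rightarrow> 'a::ab_group_add \<Rightarrow> 'a) \<Rightarrow> ('k \<Rightarrow> 'b::ab_group_add \<Rightarrow> 'b) \<Rightarrow>
   ('k \<Rightarrow> 'c::ab_group_add \<Rightarrow> 'c) \<Rightarrow> ('a \<Rightarrow> 'b \<Rightarrow> 'c) \<Rightarrow> bool" where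
  "bilinear_map s1 s2 s3 f \<longleftrightarrow>
     (\<forall>x. Vector_Spaces.linear s2 s3 (f x)) \<and> (\<forall>y. Vector_Spaces.linear s1 s3 (\<lambda>x. f x y))"

definition bilinear_on ::
  "('k::field \<Rightarrow> 'a::ab_group_add \<Rightarrow> 'a) \<Rightarrow> 'a set \<Rightarrow> ('a \<Rightarrow> 'a \<Rightarrow> 'a) \<Rightarrow> bool" where
  "bilinear_on s S f \<longleftrightarrow>
     (\<forall>x\<in>S. \<forall>y\<in>S. f x y \<in> S) \<and>
     (\<forall>x\<in>S. \<forall>y\<in>S. \<forall>z\<in>S. \<forall>c.
        f (x + y) z = f x z + f y z \<and> f z (x + y) = f z x + f z y \<and>
        f (s c x) y = s c (f x y) \<and> f x (s c y) = s c (f x y))"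

definition Leibniz_algebra :: "('k::field \<Rightarrow> 'a::ab_group_add \<Rightarrow> 'a) \<Rightarrow> ('a \<Rightarrow> 'a \<Rightarrow> 'a) \<Rightarrow> bool" where
  "Leibniz_algebra s m \<longleftrightarrow> vector_space s \<and> bilinear_map s s s m \<and>
     (\<forall>x y z. m x (m y z) = m (m x y) z + m y (m x z))"

definition Leibniz_representation ::
  "('k::field \<Rightarrow> 'a::ab_group_add \<Rightarrow> 'a) \<Rightarrow> ('k \<Rightarrow> 'v::ab_group_add \<Rightarrow> 'v) \<Rightarrow>
   ('a \<Rightarrow> 'a \<Rightarrow> 'a) \<Rightarrow> ('a \<Rightarrow> 'v \<Rightarrow> 'v) \<Rightarrow> ('a \<Rightarrow> 'v \<Rightarrow> 'v) \<Rightarrow> bool" where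
  "Leibniz_representation sA sV m l r \<longleftrightarrow>
     vector_space sV \<and> bilinear_map sA sV sV l \<and> bilinear_map sA sV sV r \<and>
     (\<forall>x y v. l (m x y) v = l x (l y v) - l y (l x v)) \<and>
     (\<forall>x y v. r (m x y) v = l x (r y v) - r y (l x v)) \<and>
     (\<forall>x y v. r y (l x v) = - r y (r x v))"

definition anti_O_operator ::
  "('k::field \<Rightarrow> 'a::ab_group_add \<Rightarrow> 'a) \<Rightarrow> ('k \<Rightarrow> 'v::ab_group_add \<Rightarrow> 'v) \<Rightarrow>
   ('a \<Rightarrow> 'a \<Rightarrow> 'a) \<Rightarrow> ('a \<Rightarrow> 'v \<Rightarrow> 'v) \<Rightarrow> ('a \<Rightarrow> 'v \<Rightarrow> 'v) \<Rightarrow> ('v \<Rightarrow> 'a) \<Rightarrow> bool" where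
  "anti_O_operator sA sV m l r T \<longleftrightarrow>
     Vector_Spaces.linear sV sA T \<and>
     (\<forall>u v. m (T u) (T v) = - T (l (T u) v + r (T v) u))"

definition strong_anti_O_operator ::
  "('k::field \<Rightarrow> 'a::ab_group_add \<Rightarrow> 'a) \<Rightarrow> ('k \<Rightarrow> 'v::ab_group_add \<Rightarrow> 'v) \<Rightarrow>
   ('a \<Rightarrow> 'a \<Rightarrow> 'a) \<Rightarrow> ('a \<Rightarrow> 'v \<Rightarrow> 'v) \<Rightarrow> ('a \<Rightarrow> 'v \<Rightarrow> 'v) \<Rightarrow> ('v \<Rightarrow> 'a) \<Rightarrow> bool" where
  "strong_anti_O_operator sA sV m l r T \<longleftrightarrow>
     anti_O_operator sA sV m l r T \<and>
     (\<forall>u v w. l (m (T u) (T v)) w + r (m (T u) (T w)) v - r (m (T v) (T w)) u = 0)"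

definition AL1_on :: "'a::ab_group_add set \<Rightarrow> ('a \<Rightarrow> 'a \<Rightarrow> 'a) \<Rightarrow> ('a \<Rightarrow> 'a \<Rightarrow> 'a) \<Rightarrow> bool" where
  "AL1_on S sc pr \<longleftrightarrow> (\<forall>x\<in>S. \<forall>y\<in>S. \<forall>z\<in>S.
     pr (sc x y + pr x y) z = sc x (sc y z + pr y z) - sc y (sc x z + pr x z))"

definition AL2_on :: "'a::ab_group_add set \<Rightarrow> ('a \<Rightarrow> 'a \<Rightarrow> 'a) \<Rightarrow> ('a \<Rightarrow> 'a \<Rightarrow> 'a) \<Rightarrow> bool" where
  "AL2_on S sc pr \<longleftrightarrow> (\<forall>x\<in>S. \<forall>y\<in>S. \<forall>z\<in>S.
     sc (sc x y + pr x y) z = sc y (sc x z) - sc x (sc y z))"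

definition AL3_on :: "'a::ab_group_add set \<Rightarrow> ('a \<Rightarrow> 'a \<Rightarrow> 'a) \<Rightarrow> ('a \<Rightarrow> 'a \<Rightarrow> 'a) \<Rightarrow> bool" where
  "AL3_on S sc pr \<longleftrightarrow> (\<forall>x\<in>S. \<forall>y\<in>S. \<forall>z\<in>S.
     pr x (sc y z + pr y z) = pr (sc y x) z - sc y (pr x z))"

definition AL4_on :: "'a::ab_group_add set \<Rightarrow> ('a \<Rightarrow> 'a \<Rightarrow> 'a) \<Rightarrow> ('a \<Rightarrow> 'a \<Rightarrow> 'a) \<Rightarrow> bool" where
  "AL4_on S sc pr \<longleftrightarrow> (\<forall>x\<in>S. \<forall>y\<in>S. \<forall>z\<in>S.
     pr (sc x y) z = - pr (pr y x) z)"

definition anti_pre_Leibniz_on ::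
  "('k::field \<Rightarrow> 'a::ab_group_add \<Rightarrow> 'a) \<Rightarrow> 'a set \<Rightarrow> ('a \<Rightarrow> 'a \<Rightarrow> 'a) \<Rightarrow> ('a \<Rightarrow> 'a \<Rightarrow> 'a) \<Rightarrow> bool" where
  "anti_pre_Leibniz_on s S sc pr \<longleftrightarrow>
     vector_space s \<and> module.subspace s S \<and> bilinear_on s S sc \<and> bilinear_on s S pr \<and>
     AL1_on S sc pr \<and> AL2_on S sc pr \<and> AL3_on S sc pr \<and> AL4_on S sc pr"

end

theory Submission
  imports Defs
begin

lemma addfacts:
  fixes f :: "'a::ab_group_add \<Rightarrow> 'b::ab_group_add"
  assumes "\<And>x y. f (x + y) = f x + f y"
  shows "f 0 = 0" "f (- x) = - f x" "f (x - y) = f x - f y"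
proof -
  interpret additive f by standard (rule assms)
  show "f 0 = 0" by (rule zero)
  show "f (- x) = - f x" by (rule minus)
  show "f (x - y) = f x - f y" by (rule diff)
qed

lemma linfacts:
  assumes "Vector_Spaces.linear s1 s2 f"
  shows "f (x + y) = f x + f y" "f (s1 c x) = s2 c (f x)" "f 0 = 0" "f (- x) = - f x"
    "f (x - y) = f x - f y"
  using assms addfacts[of f] unfolding linear_iff by auto

lemma bilfacts:
  assumes "bilinear_map s1 s2 s3 f"
  shows "f (a + b) v = f a v + f b v" "f (s1 c a) v = s3 c (f a v)" "f 0 v = 0"
    "f (- a) v = - f a v" "f (a - b) v = f a v - f b v"
    "f a (v + w) = f a v + f a w" "f a (s2 c v) = s3 c (f a v)" "f a 0 = 0"
    "f a (- v) = - f a v" "f a (v - w) = f a v - f a w"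
  using assms unfolding bilinear_map_def
  by (auto dest: linfacts)

lemma half_zero:
  fixes s :: "'k::field_char_0 \<Rightarrow> 'v::ab_group_add \<Rightarrow> 'v"
  and x :: 'v
  assumes "vector_space s" and "x + x = 0"
  shows "x = 0"
proof -
  interpret V: vector_space s by fact
  have "x = s 1 x" by simp
  also have "\<dots> = s (1/2 + 1/2) x" by simp
  also have "\<dots> = s (1/2) (x + x)" by (simp only: V.scale_left_distrib V.scale_right_distrib)
  also have "\<dots> = 0" using assms(2) by simp
  finally show ?thesis .
qed

theorem proposition2p9:
  fixes sA :: "'k::field_char_0 \<Rightarrow> 'a::ab_group_add \<Rightarrow> 'a"
    and sV :: "'k \<Rightarrow> 'v::ab_group_add \<Rightarrow> 'v"
    and mA :: "'a \<Rightarrow> 'a \<Rightarrow> 'a"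
    and l r :: "'a \<Rightarrow> 'v \<Rightarrow> 'v"
    and T :: "'v \<Rightarrow> 'a"
    and scV prV :: "'v \<Rightarrow> 'v \<Rightarrow> 'v"
  assumes finA: "fin_dim_vs sA" and finV: "fin_dim_vs sV"
    and Leib: "Leibniz_algebra sA mA"
    and rep: "Leibniz_representation sA sV mA l r"
    and Top: "anti_O_operator sA sV mA l r T"
    and scV_def: "\<And>u v. scV u v = - l (T u) v"
    and prV_def: "\<And>u v. prV u v = - r (T v) u"
  shows
    "(AL2_on UNIV scV prV \<and> AL3_on UNIV scV prV \<and> AL4_on UNIV scV prV)
     \<and> (anti_pre_Leibniz_on sV UNIV scV prV \<longleftrightarrow> strong_anti_O_operator sA sV mA l r T)
     \<and> (Leibniz_algebra sV (\<lambda>u v. scV u v + prV u v) \<longleftrightarrow> strong_anti_O_operator sA sV mA l r T)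
     \<and> (strong_anti_O_operator sA sV mA l r T \<longrightarrow>
          (\<forall>u v. T (scV u v + prV u v) = mA (T u) (T v))
          \<and> (\<forall>u v u' v'. T u = T u' \<longrightarrow> T v = T v' \<longrightarrow>
                T (scV u v) = T (scV u' v') \<and> T (prV u v) = T (prV u' v'))
          \<and> (\<exists>scA prA. (\<forall>u v. scA (T u) (T v) = T (scV u v) \<and> prA (T u) (T v) = T (prV u v))
                \<and> anti_pre_Leibniz_on sA (range T) scA prA))"
proof -
  have VSA: "vector_space sA" using Leib unfolding Leibniz_algebra_def by simp
  have VSV: "vector_space sV" using rep unfolding Leibniz_representation_def by simp
  interpret A: vector_space sA by (rule VSA)
  interpret V: vector_space sV by (rule VSV)
  have Tlin: "Vector_Spaces.linear sV sA T" using Top unfolding anti_O_operator_def by simp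
  note Tl = linfacts[OF Tlin]
  have Oop: "\<And>u v. mA (T u) (T v) = - T (l (T u) v + r (T v) u)"
    using Top unfolding anti_O_operator_def by simp
  have Mbil: "bilinear_map sA sA sA mA" using Leib unfolding Leibniz_algebra_def by simp
  have Lbil: "bilinear_map sA sV sV l" using rep unfolding Leibniz_representation_def by simp
  have Rbil: "bilinear_map sA sV sV r" using rep unfolding Leibniz_representation_def by simp
  note M = bilfacts[OF Mbil] and L = bilfacts[OF Lbil] and R = bilfacts[OF Rbil]
  have repL: "\<And>x y v. l (mA x y) v = l x (l y v) - l y (l x v)"
   and repR: "\<And>x y v. r (mA x y) v = l x (r y v) - r y (l x v)"
   and repLR: "\<And>x y v. r y (l x v) = - r y (r x v)"
    using rep unfolding Leibniz_representation_def by auto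
  define S where "S x y z = l (mA (T x) (T y)) z + r (mA (T x) (T z)) y - r (mA (T y) (T z)) x" for x y z
  define m where "m u v = scV u v + prV u v" for u v
  have strong_iff: "strong_anti_O_operator sA sV mA l r T \<longleftrightarrow> (\<forall>x y z. S x y z = 0)"
    using Top unfolding strong_anti_O_operator_def S_def by simp
  have key1: "prV (scV x y + prV x y) z - (scV x (scV y z + prV y z) - scV y (scV x z + prV x z))
     = - S x y z" for x y z
    unfolding S_def scV_def prV_def
    by (simp add: L(6-10) R(6-10) repL repR repLR algebra_simps)
  have c: "m u v = - l (T u) v - r (T v) u" for u v
    unfolding m_def scV_def prV_def by simp
  have Tc: "T (- l (T u) v - r (T v) u) = mA (T u) (T v)" for u v
    by (simp add: Oop Tl)
  have Tm: "T (m u v) = mA (T u) (T v)" for u v using c Tc by simp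
  have key2: "m x (m y z) - (m (m x y) z + m y (m x z)) = S x y z + S x y z" for x y z
    unfolding S_def
    apply (simp only: c Tc)
    by (simp add: L(6-10) R(6-10) repL repR repLR algebra_simps)
  have AL1_iff: "AL1_on UNIV scV prV \<longleftrightarrow> (\<forall>x y z. S x y z = 0)"
  proof -
    have "\<And>x y z. (prV (scV x y + prV x y) z = scV x (scV y z + prV y z) - scV y (scV x z + prV x z))
       \<longleftrightarrow> S x y z = 0"
      using key1 by (metis diff_eq_diff_eq diff_self eq_iff_diff_eq_0 neg_equal_0_iff_equal)
    then show ?thesis unfolding AL1_on_def by simp
  qed
  have sc_m: "scV (scV x y + prV x y) z = - l (mA (T x) (T y)) z" for x y z
    using Tm[of x y] by (simp add: m_def scV_def)
  have pr_m: "prV x (scV y z + prV y z) = - r (mA (T y) (T z)) x" for x y z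
    using Tm[of y z] by (simp add: m_def prV_def)
  have AL2: "AL2_on UNIV scV prV"
    unfolding AL2_on_def sc_m
    by (simp add: scV_def prV_def L(6-10) R(6-10) repL repR repLR algebra_simps)
  have AL3: "AL3_on UNIV scV prV"
    unfolding AL3_on_def pr_m
    by (simp add: scV_def prV_def L(6-10) R(6-10) repL repR repLR algebra_simps)
  have AL4: "AL4_on UNIV scV prV"
    unfolding AL4_on_def scV_def prV_def
    by (simp add: Tl L(6-10) R(6-10) repL repR repLR algebra_simps)
  have Leib_iff: "(\<forall>x y z. m x (m y z) = m (m x y) z + m y (m x z)) \<longleftrightarrow> (\<forall>x y z. S x y z = 0)"
  proof -
    have "\<And>x y z. m x (m y z) = m (m x y) z + m y (m x z) \<longleftrightarrow> S x y z = 0"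
    proof -
      fix x y z
      have "m x (m y z) = m (m x y) z + m y (m x z) \<longleftrightarrow> S x y z + S x y z = 0"
        using key2[of x y z] by (metis eq_iff_diff_eq_0)
      also have "\<dots> \<longleftrightarrow> S x y z = 0" using half_zero[OF VSV, of "S x y z"] by auto
      finally show "m x (m y z) = m (m x y) z + m y (m x z) \<longleftrightarrow> S x y z = 0" .
    qed
    then show ?thesis by simp
  qed
  have scV_lin: "scV (a + b) v = scV a v + scV b v" "scV (sV c a) v = sV c (scV a v)"
    "scV a (v + w) = scV a v + scV a w" "scV a (sV c v) = sV c (scV a v)" for a b v w c
    unfolding scV_def by (simp_all add: Tl L)
  have prV_lin: "prV (a + b) v = prV a v + prV b v" "prV (sV c a) v = sV c (prV a v)"
    "prV a (v + w) = prV a v + prV a w" "prV a (sV c v) = sV c (prV a v)" for a b v w c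
    unfolding prV_def by (simp_all add: Tl R)
  have bil_sc: "bilinear_map sV sV sV scV" and bil_pr: "bilinear_map sV sV sV prV"
    and bil_m: "bilinear_map sV sV sV m"
    unfolding bilinear_map_def linear_iff m_def
    by (simp_all add: VSV scV_lin prV_lin algebra_simps V.scale_right_distrib)
  have bon_sc: "bilinear_on sV UNIV scV" and bon_pr: "bilinear_on sV UNIV prV"
    unfolding bilinear_on_def by (simp_all add: scV_lin prV_lin)
  have P1: "anti_pre_Leibniz_on sV UNIV scV prV \<longleftrightarrow> strong_anti_O_operator sA sV mA l r T"
    unfolding anti_pre_Leibniz_on_def strong_iff
    using VSV bon_sc bon_pr AL1_iff AL2 AL3 AL4 by simp
  have P2: "Leibniz_algebra sV (\<lambda>u v. scV u v + prV u v) \<longleftrightarrow> strong_anti_O_operator sA sV mA l r T"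
    unfolding strong_iff Leibniz_algebra_def m_def[symmetric]
    using VSV bil_m Leib_iff by (simp add: m_def[abs_def])
  have wdl: "T (l (T u) w) = 0" if "T w = 0" for u w
    using Oop[of u w] that by (simp add: M L R Tl)
  have wdr: "T (r (T v) w) = 0" if "T w = 0" for v w
    using Oop[of w v] that by (simp add: M L R Tl)
  have wd: "T (scV u v) = T (scV u' v') \<and> T (prV u v) = T (prV u' v')"
    if "T u = T u'" "T v = T v'" for u v u' v'
  proof
    have "T (l (T u) (v - v')) = 0" using wdl that by (simp add: Tl)
    then show "T (scV u v) = T (scV u' v')" using that by (simp add: scV_def Tl L)
    have "T (r (T v) (u - u')) = 0" using wdr that by (simp add: Tl)
    then show "T (prV u v) = T (prV u' v')" using that by (simp add: prV_def Tl R)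
  qed
  define scA where "scA a b = T (scV (SOME u. T u = a) (SOME v. T v = b))" for a b
  define prA where "prA a b = T (prV (SOME u. T u = a) (SOME v. T v = b))" for a b
  have SA: "scA (T u) (T v) = T (scV u v)" and PA: "prA (T u) (T v) = T (prV u v)" for u v
  proof -
    have e1: "T (SOME u'. T u' = T u) = T u" by (rule someI) (rule refl)
    have e2: "T (SOME v'. T v' = T v) = T v" by (rule someI) (rule refl)
    show "scA (T u) (T v) = T (scV u v)" unfolding scA_def using wd[OF e1 e2] by simp
    show "prA (T u) (T v) = T (prV u v)" unfolding prA_def using wd[OF e1 e2] by simp
  qed
  have subT: "A.subspace (range T)"
    unfolding A.subspace_def
  proof (intro conjI ballI allI)
    show "0 \<in> range T" using Tl(3) by (metis rangeI)
    show "x + y \<in> range T" if xy: "x \<in> range T" "y \<in> range T" for x y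
    proof -
      obtain a b where "x = T a" "y = T b" using xy by auto
      then have "x + y = T (a + b)" by (simp add: Tl)
      then show ?thesis by simp
    qed
    show "sA c x \<in> range T" if xr: "x \<in> range T" for c x
    proof -
      obtain a where "x = T a" using xr by auto
      then have "sA c x = T (sV c a)" by (simp add: Tl)
      then show ?thesis by simp
    qed
  qed
  have bonA_sc: "bilinear_on sA (range T) scA"
    unfolding bilinear_on_def
    by (auto simp: SA scV_lin simp flip: Tl(1) Tl(2))
  have bonA_pr: "bilinear_on sA (range T) prA"
    unfolding bilinear_on_def
    by (auto simp: PA prV_lin simp flip: Tl(1) Tl(2))
  show ?thesis
  proof (intro conjI impI)
    show "AL2_on UNIV scV prV" by (rule AL2)
    show "AL3_on UNIV scV prV" by (rule AL3)
    show "AL4_on UNIV scV prV" by (rule AL4)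
    show "anti_pre_Leibniz_on sV UNIV scV prV \<longleftrightarrow> strong_anti_O_operator sA sV mA l r T" by (rule P1)
    show "Leibniz_algebra sV (\<lambda>u v. scV u v + prV u v) \<longleftrightarrow> strong_anti_O_operator sA sV mA l r T" by (rule P2)
    show "\<forall>u v. T (scV u v + prV u v) = mA (T u) (T v)" using Tm by (simp add: m_def)
    show "\<forall>u v u' v'. T u = T u' \<longrightarrow> T v = T v' \<longrightarrow>
                T (scV u v) = T (scV u' v') \<and> T (prV u v) = T (prV u' v')" using wd by blast
    assume st: "strong_anti_O_operator sA sV mA l r T"
    then have AL1: "AL1_on UNIV scV prV" using AL1_iff strong_iff by simp
    have "anti_pre_Leibniz_on sA (range T) scA prA"
      unfolding anti_pre_Leibniz_on_def AL1_on_def AL2_on_def AL3_on_def AL4_on_def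
    proof (intro conjI ballI)
      show "vector_space sA" by (rule VSA)
      show "A.subspace (range T)" by (rule subT)
      show "bilinear_on sA (range T) scA" by (rule bonA_sc)
      show "bilinear_on sA (range T) prA" by (rule bonA_pr)
      fix x y z assume "x \<in> range T" "y \<in> range T" "z \<in> range T"
      then obtain u v w where xyz: "x = T u" "y = T v" "z = T w" by auto
      show "prA (scA x y + prA x y) z = scA x (scA y z + prA y z) - scA y (scA x z + prA x z)"
        using AL1 unfolding AL1_on_def xyz by (simp add: SA PA flip: Tl(1) Tl(5))
      show "scA (scA x y + prA x y) z = scA y (scA x z) - scA x (scA y z)"
        using AL2 unfolding AL2_on_def xyz by (simp add: SA PA flip: Tl(1) Tl(5))
      show "prA x (scA y z + prA y z) = prA (scA y x) z - scA y (prA x z)"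
        using AL3 unfolding AL3_on_def xyz by (simp add: SA PA flip: Tl(1) Tl(5))
      show "prA (scA x y) z = - prA (prA y x) z"
        using AL4 unfolding AL4_on_def xyz by (simp add: SA PA flip: Tl(1) Tl(4))
    qed
    then show "\<exists>scA prA. (\<forall>u v. scA (T u) (T v) = T (scV u v) \<and> prA (T u) (T v) = T (prV u v))
                \<and> anti_pre_Leibniz_on sA (range T) scA prA"
      using SA PA by blast
  qed
qed

end
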